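(* Let $\mathfrak g=A_2$, $\lambda=m_1\lambda_1+m_2\lambda_2\in\Lambda^+$ and $\mu=u_1\lambda_1+u_2\lambda_2\in\Lambda^+$ with $m^\mu_{\lambda,2}\neq0$. If $m_1\ge m_2$ then $u_1+2u_2\ge2(m_1-m_2)$; if $m_1\le m_2$ then $2u_1+u_2\ge2(m_2-m_1)$.
   Context: $A_2=\mathfrak{sl}_3$ with fundamental weights $\lambda_1,\lambda_2$ and dominant weights $\Lambda^+=\mathbb N\lambda_1+\mathbb N\lambda_2$. The plethysm multiplicities $m^\mu_{\lambda,2}$ are defined by $\psi_2(\mathrm{ch}_\lambda)=\sum_{\mu\in\Lambda^+}m^\mu_{\lambda,2}\mathrm{ch}_\mu$, with $\mathrm{ch}_\lambda$ the formal character of the irreducible representation $V_\lambda$ and $\psi_2(e_\nu)=e_{2\nu}$. *)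

theory Defs
  imports Main
begin

text \<open>Weights of A2 = sl3 in fundamental-weight coordinates: (a,b) stands for
  a*lambda_1 + b*lambda_2.  Elements of the group ring Z[weight lattice]
  (formal characters) are finitely supported functions wt => int.\<close>

type_synonym wt = "int \<times> int"

definition wadd :: "wt \<Rightarrow> wt \<Rightarrow> wt" where
  "wadd x y = (fst x + fst y, snd x + snd y)"

definition wsub :: "wt \<Rightarrow> wt \<Rightarrow> wt" where
  "wsub x y = (fst x - fst y, snd x - snd y)"

definition dominant :: "wt \<Rightarrow> bool" where
  "dominant x \<longleftrightarrow> fst x \<ge> 0 \<and> snd x \<ge> 0"

definition rho :: wt where "rho = (1, 1)"

text \<open>The Weyl group of A2 (order 6) acting on fundamental-weight coordinates,
  with simple reflections s1 (a,b) = (-a, a+b), s2 (a,b) = (a+b, -b);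
  listed as (sign, action) pairs: 1, s1, s2, s1 s2, s2 s1, w0.\<close>

definition weyl :: "(int \<times> (wt \<Rightarrow> wt)) list" where
  "weyl = [ (1,  \<lambda>(a,b). (a, b)),
            (-1, \<lambda>(a,b). (-a, a + b)),
            (-1, \<lambda>(a,b). (a + b, -b)),
            (1,  \<lambda>(a,b). (-a - b, a)),
            (1,  \<lambda>(a,b). (b, -a - b)),
            (-1, \<lambda>(a,b). (-b, -a)) ]"

definition alt :: "wt \<Rightarrow> wt \<Rightarrow> int" where
  "alt \<nu> x = sum_list (map (\<lambda>(s, w). if w \<nu> = x then s else 0) weyl)"

text \<open>Multiplication in the group ring (convolution), for finitely supported f.\<close>
definition conv :: "(wt \<Rightarrow> int) \<Rightarrow> (wt \<Rightarrow> int) \<Rightarrow> wt \<Rightarrow> int" where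
  "conv f g x = (\<Sum>y\<in>{y. f y \<noteq> 0}. f y * g (wsub x y))"

text \<open>Formal character ch_lambda of the irreducible module V_lambda, defined
  via the Weyl character formula ch_lambda * A_rho = A_(lambda+rho)
  (the group ring is a domain, so ch_lambda is uniquely determined).\<close>
definition ch :: "wt \<Rightarrow> wt \<Rightarrow> int" where
  "ch lam = (THE f. finite {x. f x \<noteq> 0} \<and> conv f (alt rho) = alt (wadd lam rho))"

definition psi2 :: "(wt \<Rightarrow> int) \<Rightarrow> wt \<Rightarrow> int" where
  "psi2 f x = (if even (fst x) \<and> even (snd x) then f (fst x div 2, snd x div 2) else 0)"

text \<open>Plethysm multiplicities: psi_2(ch_lambda) = sum over dominant mu of
  m^mu_(lambda,2) ch_mu (the ch_mu, mu dominant, are linearly independent).\<close>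
definition pleth_mult :: "wt \<Rightarrow> wt \<Rightarrow> int" where
  "pleth_mult lam = (THE m. finite {\<mu>. m \<mu> \<noteq> 0} \<and> (\<forall>\<mu>. \<not> dominant \<mu> \<longrightarrow> m \<mu> = 0) \<and>
      psi2 (ch lam) = (\<lambda>x. \<Sum>\<mu>\<in>{\<mu>. m \<mu> \<noteq> 0}. m \<mu> * ch \<mu> x))"

end

theory Submission imports Defs begin

section \<open>Kostka numbers for A2\<close>

definition mi :: "int \<Rightarrow> int \<Rightarrow> int" where "mi p c = min c (p - c)"

definition kk :: "int \<Rightarrow> int \<Rightarrow> int \<Rightarrow> int \<Rightarrow> int \<Rightarrow> int" where
  "kk p q c1 c2 c3 = max 0 (1 + min (min q (p - q)) (min (min (mi p c1) (mi p c2)) (mi p c3)))"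

lemma kk_sym12: "kk p q c1 c2 c3 = kk p q c2 c1 c3"
  unfolding kk_def by (metis min.commute)
lemma kk_sym23: "kk p q c1 c2 c3 = kk p q c1 c3 c2"
  unfolding kk_def by (metis min.commute min.assoc)
lemma kk_nz: "kk p q c1 c2 c3 \<noteq> 0 \<Longrightarrow> 0 \<le> c1 \<and> c1 \<le> p \<and> 0 \<le> c2 \<and> c2 \<le> p \<and> 0 \<le> c3 \<and> c3 \<le> p"
  unfolding kk_def mi_def by (simp add: max_def min_def split: if_splits)

definition Lk :: "int \<Rightarrow> int \<Rightarrow> int \<Rightarrow> int \<Rightarrow> int \<Rightarrow> int" where
  "Lk p q c1 c2 c3 = kk p q (c1-2) (c2-1) c3 - kk p q (c1-1) (c2-2) c3 - kk p q (c1-2) c2 (c3-1)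
     + kk p q c1 (c2-2) (c3-1) + kk p q (c1-1) c2 (c3-2) - kk p q c1 (c2-1) (c3-2)"

definition Rk :: "int \<Rightarrow> int \<Rightarrow> int \<Rightarrow> int \<Rightarrow> int \<Rightarrow> int" where
  "Rk p q c1 c2 c3 = (if c1 = p+2 \<and> c2 = q+1 \<and> c3 = 0 then 1 else 0)
     - (if c1 = q+1 \<and> c2 = p+2 \<and> c3 = 0 then 1 else 0)
     - (if c1 = p+2 \<and> c2 = 0 \<and> c3 = q+1 then 1 else 0)
     + (if c1 = q+1 \<and> c2 = 0 \<and> c3 = p+2 then 1 else 0)
     + (if c1 = 0 \<and> c2 = p+2 \<and> c3 = q+1 then 1 else 0)
     - (if c1 = 0 \<and> c2 = q+1 \<and> c3 = p+2 then 1 else 0)"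

lemma weyl_id_sorted:
  fixes p q c1 c2 c3 :: int
  assumes "p \<ge> q" "q \<ge> 0" "c1 + c2 + c3 = p + q + 3" "c1 \<ge> c2" "c2 \<ge> c3"
  shows "Lk p q c1 c2 c3 = Rk p q c1 c2 c3"
  using assms unfolding Lk_def Rk_def kk_def mi_def min_def max_def
  supply [[smt_timeout = 1000]] by (smt (verit))

lemma Lk_swap12: "Lk p q c2 c1 c3 = - Lk p q c1 c2 c3"
  unfolding Lk_def
  using kk_sym12[of p q "c2-2" "c1-1" c3] kk_sym12[of p q "c2-1" "c1-2" c3]
    kk_sym12[of p q "c2-2" c1 "c3-1"] kk_sym12[of p q c2 "c1-2" "c3-1"]
    kk_sym12[of p q "c2-1" c1 "c3-2"] kk_sym12[of p q c2 "c1-1" "c3-2"]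
  by linarith

lemma Lk_swap23: "Lk p q c1 c3 c2 = - Lk p q c1 c2 c3"
  unfolding Lk_def
  using kk_sym23[of p q "c1-2" "c3-1" c2] kk_sym23[of p q "c1-1" "c3-2" c2]
    kk_sym23[of p q "c1-2" c3 "c2-1"] kk_sym23[of p q c1 "c3-2" "c2-1"]
    kk_sym23[of p q "c1-1" c3 "c2-2"] kk_sym23[of p q c1 "c3-1" "c2-2"]
  by linarith

lemma Rk_swap12: "Rk p q c2 c1 c3 = - Rk p q c1 c2 c3"
  unfolding Rk_def by (smt (verit))
lemma Rk_swap23: "Rk p q c1 c3 c2 = - Rk p q c1 c2 c3"
  unfolding Rk_def by (smt (verit))

lemma weyl_id:
  fixes p q c1 c2 c3 :: int
  assumes "p \<ge> q" "q \<ge> 0" "c1 + c2 + c3 = p + q + 3"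
  shows "Lk p q c1 c2 c3 = Rk p q c1 c2 c3"
proof -
  define G where "G = (\<lambda>c1 c2 c3. Lk p q c1 c2 c3 - Rk p q c1 c2 c3)"
  have s12: "G b a c = - G a b c" for a b c unfolding G_def
    using Lk_swap12[of p q a b c] Rk_swap12[of p q a b c] by linarith
  have s23: "G a c b = - G a b c" for a b c unfolding G_def
    using Lk_swap23[of p q a b c] Rk_swap23[of p q a b c] by linarith
  have z: "G a b c = 0" if "a + b + c = p + q + 3" "a \<ge> b" "b \<ge> c" for a b c
    unfolding G_def using weyl_id_sorted[OF assms(1,2) that] by linarith
  have z': "G a b c = 0" if "a \<ge> b" "b \<ge> c" "a + b + c = c1 + c2 + c3" for a b c
    using z[of a b c] that assms(3) by linarith
  have "G c1 c2 c3 = 0"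
  proof -
    consider "c1 \<ge> c2" "c2 \<ge> c3" | "c2 \<ge> c1" "c1 \<ge> c3" | "c1 \<ge> c3" "c3 \<ge> c2"
      | "c2 \<ge> c3" "c3 \<ge> c1" | "c3 \<ge> c1" "c1 \<ge> c2" | "c3 \<ge> c2" "c2 \<ge> c1" by linarith
    then show ?thesis
    proof cases
      case 1 then show ?thesis using z'[where a=c1 and b=c2 and c=c3] by linarith
    next
      case 2 then show ?thesis using z'[where a=c2 and b=c1 and c=c3] s12[where a=c1 and b=c2 and c=c3] by linarith
    next
      case 3 then show ?thesis using z'[where a=c1 and b=c3 and c=c2] s23[where a=c1 and b=c2 and c=c3] by linarith
    next
      case 4 then show ?thesis using z'[where a=c2 and b=c3 and c=c1] s12[where a=c1 and b=c2 and c=c3] s23[where a=c2 and b=c1 and c=c3] by linarith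
    next
      case 5 then show ?thesis using z'[where a=c3 and b=c1 and c=c2] s23[where a=c1 and b=c2 and c=c3] s12[where a=c1 and b=c3 and c=c2] by linarith
    next
      case 6 then show ?thesis using z'[where a=c3 and b=c2 and c=c1] s12[where a=c1 and b=c2 and c=c3] s23[where a=c2 and b=c1 and c=c3] s12[where a=c2 and b=c3 and c=c1] by linarith
    qed
  qed
  then show ?thesis unfolding G_def by linarith
qed

section \<open>The explicit character\<close>

definition chf :: "int \<Rightarrow> int \<Rightarrow> wt \<Rightarrow> int" where
  "chf m1 m2 x = (let t = m1 + 2*m2 - fst x - 2 * snd x in
     if 3 dvd t then kk (m1+m2) m2 (t div 3 + snd x + fst x) (t div 3 + snd x) (t div 3) else 0)"

lemma chf_c:
  assumes "a = ca - cb" "b = cb - cc" "ca + cb + cc = m1 + 2*m2"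
  shows "chf m1 m2 (a,b) = kk (m1+m2) m2 ca cb cc"
proof -
  have t: "m1 + 2*m2 - a - 2*b = 3 * cc" using assms by simp
  have e: "3 * cc div 3 = cc" "cc + b = cb" "cb + a = ca" using assms by simp_all
  show ?thesis unfolding chf_def Let_def fst_conv snd_conv t by (simp add: e)
qed

lemma chf_nd:
  assumes "\<not> 3 dvd (m1 + 2*m2 - a - 2*b)"
  shows "chf m1 m2 (a,b) = 0"
  using assms unfolding chf_def Let_def by simp

lemma chf_box:
  assumes "chf m1 m2 x \<noteq> 0"
  shows "\<bar>fst x\<bar> \<le> m1 + m2 \<and> \<bar>snd x\<bar> \<le> m1 + m2"
proof -
  obtain a b where x: "x = (a,b)" by fastforce
  have d: "3 dvd (m1 + 2*m2 - a - 2*b)" using assms chf_nd x by blast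
  then obtain k where k: "m1 + 2*m2 - a - 2*b = 3*k" by blast
  have "chf m1 m2 (a,b) = kk (m1+m2) m2 (k+b+a) (k+b) k"
    by (rule chf_c) (use k in auto)
  then have "kk (m1+m2) m2 (k+b+a) (k+b) k \<noteq> 0" using assms x by simp
  then show ?thesis using kk_nz x by force
qed

lemma box_finite: "finite {x :: wt. \<bar>fst x\<bar> \<le> B \<and> \<bar>snd x\<bar> \<le> B}"
proof -
  have "{x :: wt. \<bar>fst x\<bar> \<le> B \<and> \<bar>snd x\<bar> \<le> B} \<subseteq> {-B..B} \<times> {-B..B}" by auto
  then show ?thesis by (rule finite_subset) simp
qed

lemma chf_finite: "finite {x. chf m1 m2 x \<noteq> 0}"
  by (rule finite_subset[OF _ box_finite[of "m1+m2"]]) (use chf_box in auto)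

definition alt6 :: "(wt \<Rightarrow> int) \<Rightarrow> wt \<Rightarrow> wt \<Rightarrow> int" where
  "alt6 f \<nu> x = f (wsub x \<nu>) - f (wsub x (- fst \<nu>, fst \<nu> + snd \<nu>))
     - f (wsub x (fst \<nu> + snd \<nu>, - snd \<nu>)) + f (wsub x (- fst \<nu> - snd \<nu>, fst \<nu>))
     + f (wsub x (snd \<nu>, - fst \<nu> - snd \<nu>)) - f (wsub x (- snd \<nu>, - fst \<nu>))"

lemma alt_eq: "alt \<nu> z = (if \<nu> = z then 1 else 0) - (if (- fst \<nu>, fst \<nu> + snd \<nu>) = z then 1 else 0)
     - (if (fst \<nu> + snd \<nu>, - snd \<nu>) = z then 1 else 0) + (if (- fst \<nu> - snd \<nu>, fst \<nu>) = z then 1 else 0)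
     + (if (snd \<nu>, - fst \<nu> - snd \<nu>) = z then 1 else 0) - (if (- snd \<nu>, - fst \<nu>) = z then 1 else 0)"
  by (cases \<nu>) (simp add: alt_def weyl_def)

lemma sum_delta_wsub:
  fixes f :: "wt \<Rightarrow> int"
  assumes "finite {y. f y \<noteq> 0}"
  shows "(\<Sum>y\<in>{y. f y \<noteq> 0}. f y * (if v = wsub x y then 1 else 0)) = f (wsub x v)"
proof -
  have e: "(v = wsub x y) = (y = wsub x v)" for y
    by (cases x; cases y; cases v) (auto simp: wsub_def)
  have "(\<Sum>y\<in>{y. f y \<noteq> 0}. f y * (if v = wsub x y then 1 else 0))
      = (\<Sum>y\<in>{y. f y \<noteq> 0}. if y = wsub x v then f y else 0)"
    by (intro sum.cong refl) (simp add: e)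
  also have "\<dots> = f (wsub x v)" using assms by (simp add: sum.delta)
  finally show ?thesis .
qed

lemma conv_alt:
  fixes f :: "wt \<Rightarrow> int"
  assumes "finite {y. f y \<noteq> 0}"
  shows "conv f (alt \<nu>) x = alt6 f \<nu> x"
proof -
  let ?S = "{y. f y \<noteq> 0}"
  let ?d = "\<lambda>v y. (if v = wsub x y then 1 else 0) :: int"
  have "conv f (alt \<nu>) x = (\<Sum>y\<in>?S. f y * ?d \<nu> y - f y * ?d (- fst \<nu>, fst \<nu> + snd \<nu>) y
     - f y * ?d (fst \<nu> + snd \<nu>, - snd \<nu>) y + f y * ?d (- fst \<nu> - snd \<nu>, fst \<nu>) y
     + f y * ?d (snd \<nu>, - fst \<nu> - snd \<nu>) y - f y * ?d (- snd \<nu>, - fst \<nu>) y)"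
    unfolding conv_def alt_eq by (simp add: algebra_simps)
  also have "\<dots> = alt6 f \<nu> x"
    unfolding alt6_def sum.distrib sum_subtractf sum_delta_wsub[OF assms] by simp
  finally show ?thesis .
qed

lemma chf_conv:
  assumes "m1 \<ge> 0" "m2 \<ge> 0"
  shows "alt6 (chf m1 m2) rho x = alt (wadd (m1, m2) rho) x"
proof -
  obtain a b where x: "x = (a,b)" by fastforce
  show ?thesis
  proof (cases "3 dvd (m1 + 2*m2 + 3 - a - 2*b)")
    case True
    then obtain c3 where c3: "m1 + 2*m2 + 3 - a - 2*b = 3*c3" by blast
    define c2 where "c2 = c3 + b"
    define c1 where "c1 = c2 + a"
    have sum: "c1 + c2 + c3 = (m1+m2) + m2 + 3" using c3 c1_def c2_def by simp
    have W: "Lk (m1+m2) m2 c1 c2 c3 = Rk (m1+m2) m2 c1 c2 c3"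
      by (rule weyl_id) (use assms sum in auto)
    have t1: "chf m1 m2 (a-1,b-1) = kk (m1+m2) m2 (c1-2) (c2-1) c3"
      by (rule chf_c) (use sum c1_def c2_def in simp_all)
    have t2: "chf m1 m2 (a+1,b-2) = kk (m1+m2) m2 (c1-1) (c2-2) c3"
      by (rule chf_c) (use sum c1_def c2_def in simp_all)
    have t3: "chf m1 m2 (a-2,b+1) = kk (m1+m2) m2 (c1-2) c2 (c3-1)"
      by (rule chf_c) (use sum c1_def c2_def in simp_all)
    have t4: "chf m1 m2 (a+2,b-1) = kk (m1+m2) m2 c1 (c2-2) (c3-1)"
      by (rule chf_c) (use sum c1_def c2_def in simp_all)
    have t5: "chf m1 m2 (a-1,b+2) = kk (m1+m2) m2 (c1-1) c2 (c3-2)"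
      by (rule chf_c) (use sum c1_def c2_def in simp_all)
    have t6: "chf m1 m2 (a+1,b+1) = kk (m1+m2) m2 c1 (c2-1) (c3-2)"
      by (rule chf_c) (use sum c1_def c2_def in simp_all)
    have L: "alt6 (chf m1 m2) rho x = Lk (m1+m2) m2 c1 c2 c3"
      unfolding alt6_def Lk_def rho_def x wsub_def
      by (simp add: t1 t2 t3 t4 t5 t6)
    let ?n = "wadd (m1, m2) rho"
    have n: "fst ?n = m1 + 1" "snd ?n = m2 + 1" by (simp_all add: wadd_def rho_def)
    have i1: "(?n = (a,b)) \<longleftrightarrow> (c1 = m1+m2+2 \<and> c2 = m2+1 \<and> c3 = 0)"
      using c3 c1_def c2_def by (auto simp: wadd_def rho_def)
    have i2: "((- fst ?n, fst ?n + snd ?n) = (a,b)) \<longleftrightarrow> (c1 = m2+1 \<and> c2 = m1+m2+2 \<and> c3 = 0)"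
      unfolding n using c3 c1_def c2_def by auto
    have i3: "((fst ?n + snd ?n, - snd ?n) = (a,b)) \<longleftrightarrow> (c1 = m1+m2+2 \<and> c2 = 0 \<and> c3 = m2+1)"
      unfolding n using c3 c1_def c2_def by auto
    have i4: "((- fst ?n - snd ?n, fst ?n) = (a,b)) \<longleftrightarrow> (c1 = 0 \<and> c2 = m1+m2+2 \<and> c3 = m2+1)"
      unfolding n using c3 c1_def c2_def by auto
    have i5: "((snd ?n, - fst ?n - snd ?n) = (a,b)) \<longleftrightarrow> (c1 = m2+1 \<and> c2 = 0 \<and> c3 = m1+m2+2)"
      unfolding n using c3 c1_def c2_def by auto
    have i6: "((- snd ?n, - fst ?n) = (a,b)) \<longleftrightarrow> (c1 = 0 \<and> c2 = m2+1 \<and> c3 = m1+m2+2)"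
      unfolding n using c3 c1_def c2_def by auto
    have R: "alt (wadd (m1, m2) rho) x = Rk (m1+m2) m2 c1 c2 c3"
      unfolding alt_eq x i1 i2 i3 i4 i5 i6 Rk_def by (simp add: add.assoc)
    show ?thesis using L R W by simp
  next
    case False
    have nd: "\<not> 3 dvd (m1 + 2*m2 - a' - 2*b')" if "m1 + 2*m2 - a' - 2*b' = m1 + 2*m2 + 3 - a - 2*b + 3*k" for a' b' k
    proof
      assume "3 dvd (m1 + 2*m2 - a' - 2*b')"
      then have "3 dvd (m1 + 2*m2 + 3 - a - 2*b + 3*k)" using that by simp
      then have "3 dvd (m1 + 2*m2 + 3 - a - 2*b + 3*k - 3*k)" by (rule dvd_diff) simp
      then show False using False by simp
    qed
    have z: "chf m1 m2 (a', b') = 0" if "m1 + 2*m2 - a' - 2*b' = m1 + 2*m2 + 3 - a - 2*b + 3*k" for a' b' k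
      using chf_nd nd that by blast
    have "chf m1 m2 (a-1,b-1) = 0" by (rule z[where k=0]) simp
    moreover have "chf m1 m2 (a+1,b-2) = 0" by (rule z[where k=0]) simp
    moreover have "chf m1 m2 (a-2,b+1) = 0" by (rule z[where k="-1"]) simp
    moreover have "chf m1 m2 (a+2,b-1) = 0" by (rule z[where k="-1"]) simp
    moreover have "chf m1 m2 (a-1,b+2) = 0" by (rule z[where k="-2"]) simp
    moreover have "chf m1 m2 (a+1,b+1) = 0" by (rule z[where k="-2"]) simp
    ultimately have L: "alt6 (chf m1 m2) rho x = 0"
      unfolding alt6_def rho_def x wsub_def by simp
    let ?n = "wadd (m1, m2) rho"
    have n: "fst ?n = m1 + 1" "snd ?n = m2 + 1" by (simp_all add: wadd_def rho_def)
    have cz: "False" if "m1 + 2*m2 + 3 - a - 2*b = 3*k" for k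
      using False that by simp
    have j1: "(?n = (a,b)) = False"
    proof -
      have "?n = (a,b) \<Longrightarrow> m1 + 2*m2 + 3 - a - 2*b = 3*(0)"
        by (auto simp: wadd_def rho_def)
      then show ?thesis using cz by blast
    qed
    have j2: "((- fst ?n, fst ?n + snd ?n) = (a,b)) = False"
    proof -
      have "(- fst ?n, fst ?n + snd ?n) = (a,b) \<Longrightarrow> m1 + 2*m2 + 3 - a - 2*b = 3*(0)"
        by (cases "(- fst ?n, fst ?n + snd ?n)") (simp add: n)
      then show ?thesis using cz by blast
    qed
    have j3: "((fst ?n + snd ?n, - snd ?n) = (a,b)) = False"
    proof -
      have "(fst ?n + snd ?n, - snd ?n) = (a,b) \<Longrightarrow> m1 + 2*m2 + 3 - a - 2*b = 3*(m2+1)"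
        by (cases "(fst ?n + snd ?n, - snd ?n)") (simp add: n)
      then show ?thesis using cz by blast
    qed
    have j4: "((- fst ?n - snd ?n, fst ?n) = (a,b)) = False"
    proof -
      have "(- fst ?n - snd ?n, fst ?n) = (a,b) \<Longrightarrow> m1 + 2*m2 + 3 - a - 2*b = 3*(m2+1)"
        by (cases "(- fst ?n - snd ?n, fst ?n)") (simp add: n)
      then show ?thesis using cz by blast
    qed
    have j5: "((snd ?n, - fst ?n - snd ?n) = (a,b)) = False"
    proof -
      have "(snd ?n, - fst ?n - snd ?n) = (a,b) \<Longrightarrow> m1 + 2*m2 + 3 - a - 2*b = 3*(m1+m2+2)"
        by (cases "(snd ?n, - fst ?n - snd ?n)") (simp add: n)
      then show ?thesis using cz by blast
    qed
    have j6: "((- snd ?n, - fst ?n) = (a,b)) = False"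
    proof -
      have "(- snd ?n, - fst ?n) = (a,b) \<Longrightarrow> m1 + 2*m2 + 3 - a - 2*b = 3*(m1+m2+2)"
        by (cases "(- snd ?n, - fst ?n)") (simp add: n)
      then show ?thesis using cz by blast
    qed
    have R: "alt (wadd (m1, m2) rho) x = 0"
      unfolding alt_eq x j1 j2 j3 j4 j5 j6 by simp
    show ?thesis using L R by simp
  qed
qed


lemma alt6_inj:
  fixes h :: "wt \<Rightarrow> int"
  assumes fin: "finite {y. h y \<noteq> 0}" and z: "\<And>x. alt6 h rho x = 0"
  shows "h = (\<lambda>_. 0)"
proof (rule ccontr)
  let ?S = "{y. h y \<noteq> 0}"
  let ?phi = "\<lambda>y::wt. fst y + snd y"
  assume "h \<noteq> (\<lambda>_. 0)"
  then have ne: "?S \<noteq> {}" by auto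
  define m where "m = Max (?phi ` ?S)"
  have "m \<in> ?phi ` ?S" unfolding m_def using fin ne by (intro Max_in) auto
  then obtain y1 y2 where yS: "(y1,y2) \<in> ?S" and ym: "y1 + y2 = m" by auto
  have ge: "?phi z \<le> m" if "z \<in> ?S" for z unfolding m_def using fin that by (intro Max_ge) auto
  have out: "h (a,b) = 0" if "a + b > m" for a b
  proof (rule ccontr)
    assume "h (a,b) \<noteq> 0"
    then have "a + b \<le> m" using ge[of "(a,b)"] by simp
    then show False using that by simp
  qed
  have "alt6 h rho (y1 + 1, y2 + 1) = h (y1,y2)"
    unfolding alt6_def rho_def wsub_def by (simp add: out ym[symmetric])
  then show False using z yS by simp
qed

lemma ch_eq:
  assumes "m1 \<ge> 0" "m2 \<ge> 0"
  shows "ch (m1, m2) = chf m1 m2"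
  unfolding ch_def
proof (rule the_equality)
  show "finite {x. chf m1 m2 x \<noteq> 0} \<and> conv (chf m1 m2) (alt rho) = alt (wadd (m1, m2) rho)"
    using chf_finite[of m1 m2] by (simp add: fun_eq_iff conv_alt[OF chf_finite] chf_conv[OF assms])
next
  fix f assume f: "finite {x. f x \<noteq> 0} \<and> conv f (alt rho) = alt (wadd (m1, m2) rho)"
  let ?h = "\<lambda>x. f x - chf m1 m2 x"
  have fin: "finite {x. ?h x \<noteq> 0}"
    by (rule finite_subset[of _ "{x. f x \<noteq> 0} \<union> {x. chf m1 m2 x \<noteq> 0}"])
       (use f chf_finite in auto)
  have "alt6 ?h rho x = 0" for x
  proof -
    have "alt6 ?h rho x = alt6 f rho x - alt6 (chf m1 m2) rho x" unfolding alt6_def by simp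
    also have "\<dots> = conv f (alt rho) x - conv (chf m1 m2) (alt rho) x"
      using conv_alt[of f rho x] conv_alt[OF chf_finite, of m1 m2 rho x] f by simp
    also have "\<dots> = 0" using f conv_alt[OF chf_finite] chf_conv[OF assms] by simp
    finally show ?thesis .
  qed
  then have h0: "?h = (\<lambda>_. 0)" using alt6_inj[OF fin] by blast
  have "f x = chf m1 m2 x" for x using fun_cong[OF h0, of x] by simp
  then show "f = chf m1 m2" by (simp add: fun_eq_iff)
qed

lemma ch_dom:
  assumes "dominant \<mu>"
  shows "ch \<mu> = chf (fst \<mu>) (snd \<mu>)"
  using ch_eq[of "fst \<mu>" "snd \<mu>"] assms unfolding dominant_def by simp

lemma ch_finite: "dominant \<mu> \<Longrightarrow> finite {x. ch \<mu> x \<noteq> 0}"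
  using ch_dom chf_finite by simp

lemma ch_alt6: "dominant \<mu> \<Longrightarrow> alt6 (ch \<mu>) rho x = alt (wadd \<mu> rho) x"
  using ch_dom[of \<mu>] chf_conv[of "fst \<mu>" "snd \<mu>"] unfolding dominant_def by simp

lemma alt6_sum:
  "alt6 (\<lambda>x. \<Sum>\<mu>\<in>S. c \<mu> * g \<mu> x) \<nu> x = (\<Sum>\<mu>\<in>S. c \<mu> * alt6 (g \<mu>) \<nu> x)"
proof -
  let ?p1 = "wsub x \<nu>" and ?p2 = "wsub x (- fst \<nu>, fst \<nu> + snd \<nu>)"
    and ?p3 = "wsub x (fst \<nu> + snd \<nu>, - snd \<nu>)" and ?p4 = "wsub x (- fst \<nu> - snd \<nu>, fst \<nu>)"
    and ?p5 = "wsub x (snd \<nu>, - fst \<nu> - snd \<nu>)" and ?p6 = "wsub x (- snd \<nu>, - fst \<nu>)"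
  have "(\<Sum>\<mu>\<in>S. c \<mu> * alt6 (g \<mu>) \<nu> x) = (\<Sum>\<mu>\<in>S. c \<mu> * g \<mu> ?p1 - c \<mu> * g \<mu> ?p2
     - c \<mu> * g \<mu> ?p3 + c \<mu> * g \<mu> ?p4 + c \<mu> * g \<mu> ?p5 - c \<mu> * g \<mu> ?p6)"
    unfolding alt6_def by (rule sum.cong) (simp_all add: algebra_simps)
  also have "\<dots> = alt6 (\<lambda>x. \<Sum>\<mu>\<in>S. c \<mu> * g \<mu> x) \<nu> x"
    unfolding alt6_def sum.distrib sum_subtractf by (rule refl)
  finally show ?thesis by simp
qed

lemma alt_dom:
  assumes "dominant \<mu>" "dominant \<mu>0"
  shows "alt (wadd \<mu> rho) (wadd \<mu>0 rho) = (if \<mu> = \<mu>0 then 1 else 0)"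
proof -
  obtain a b where m: "\<mu> = (a,b)" by fastforce
  obtain c d where m0: "\<mu>0 = (c,d)" by fastforce
  have nn: "a \<ge> 0" "b \<ge> 0" "c \<ge> 0" "d \<ge> 0" using assms m m0 unfolding dominant_def by auto
  let ?n = "wadd \<mu> rho" and ?z = "wadd \<mu>0 rho"
  have n: "fst ?n = a+1" "snd ?n = b+1" "?z = (c+1, d+1)" unfolding m m0 wadd_def rho_def by simp_all
  have k1: "(?n = ?z) = (\<mu> = \<mu>0)" unfolding m m0 wadd_def rho_def by auto
  have k2: "((- fst ?n, fst ?n + snd ?n) = ?z) = False" unfolding n using nn by simp
  have k3: "((fst ?n + snd ?n, - snd ?n) = ?z) = False" unfolding n using nn by simp
  have k4: "((- fst ?n - snd ?n, fst ?n) = ?z) = False" unfolding n using nn by simp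
  have k5: "((snd ?n, - fst ?n - snd ?n) = ?z) = False" unfolding n using nn by simp
  have k6: "((- snd ?n, - fst ?n) = ?z) = False" unfolding n using nn by simp
  show ?thesis unfolding alt_eq k1 k2 k3 k4 k5 k6 by simp
qed

lemma coef:
  assumes fin: "finite S" and dS: "\<forall>\<mu>\<in>S. dominant \<mu>" and d0: "dominant \<mu>0"
  shows "alt6 (\<lambda>x. \<Sum>\<mu>\<in>S. c \<mu> * ch \<mu> x) rho (wadd \<mu>0 rho) = (if \<mu>0 \<in> S then c \<mu>0 else 0)"
proof -
  have "alt6 (\<lambda>x. \<Sum>\<mu>\<in>S. c \<mu> * ch \<mu> x) rho (wadd \<mu>0 rho)
      = (\<Sum>\<mu>\<in>S. c \<mu> * alt (wadd \<mu> rho) (wadd \<mu>0 rho))"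
    unfolding alt6_sum using dS ch_alt6 by (intro sum.cong) auto
  also have "\<dots> = (\<Sum>\<mu>\<in>S. if \<mu> = \<mu>0 then c \<mu> else 0)"
    using dS d0 alt_dom by (intro sum.cong) auto
  also have "\<dots> = (if \<mu>0 \<in> S then c \<mu>0 else 0)" using fin by (simp add: sum.delta')
  finally show ?thesis .
qed


section \<open>Weyl invariance\<close>

definition winv :: "(wt \<Rightarrow> int) \<Rightarrow> bool" where
  "winv f \<longleftrightarrow> (\<forall>u v. f (-u, u+v) = f (u,v)) \<and> (\<forall>u v. f (u+v, -v) = f (u,v))"

lemma chf_s1: "chf m1 m2 (-a, a+b) = chf m1 m2 (a,b)"
proof (cases "3 dvd (m1 + 2*m2 - a - 2*b)")
  case True
  then obtain k where k: "m1 + 2*m2 - a - 2*b = 3*k" by blast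
  have e1: "chf m1 m2 (a,b) = kk (m1+m2) m2 (k+b+a) (k+b) k" by (rule chf_c) (use k in linarith)+
  have e2: "chf m1 m2 (-a,a+b) = kk (m1+m2) m2 (k+b) (k+b+a) k" by (rule chf_c) (use k in linarith)+
  show ?thesis unfolding e1 e2 by (rule kk_sym12)
next
  case False
  have t: "m1 + 2*m2 - (-a) - 2*(a+b) = m1 + 2*m2 - a - 2*b" by simp
  have n1: "chf m1 m2 (-a, a+b) = 0" by (rule chf_nd) (unfold t, rule False)
  have n2: "chf m1 m2 (a, b) = 0" by (rule chf_nd) (rule False)
  show ?thesis unfolding n1 n2 ..
qed

lemma chf_s2: "chf m1 m2 (a+b, -b) = chf m1 m2 (a,b)"
proof (cases "3 dvd (m1 + 2*m2 - a - 2*b)")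
  case True
  then obtain k where k: "m1 + 2*m2 - a - 2*b = 3*k" by blast
  have e1: "chf m1 m2 (a,b) = kk (m1+m2) m2 (k+b+a) (k+b) k" by (rule chf_c) (use k in linarith)+
  have e2: "chf m1 m2 (a+b,-b) = kk (m1+m2) m2 (k+b+a) k (k+b)" by (rule chf_c) (use k in linarith)+
  show ?thesis unfolding e1 e2 by (rule kk_sym23[symmetric])
next
  case False
  have t: "m1 + 2*m2 - (a+b) - 2*(-b) = (m1 + 2*m2 - a - 2*b) + 3*b" by simp
  have "\<not> 3 dvd (m1 + 2*m2 - (a+b) - 2*(-b))"
  proof
    assume "3 dvd (m1 + 2*m2 - (a+b) - 2*(-b))"
    then have "3 dvd ((m1 + 2*m2 - a - 2*b) + 3*b)" unfolding t .
    then have "3 dvd ((m1 + 2*m2 - a - 2*b) + 3*b - 3*b)" by (rule dvd_diff) simp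
    then have "3 dvd (m1 + 2*m2 - a - 2*b)" by (simp only: add_diff_cancel_right')
    then show False using False by blast
  qed
  then have n1: "chf m1 m2 (a+b, -b) = 0" by (rule chf_nd)
  have n2: "chf m1 m2 (a, b) = 0" by (rule chf_nd) (rule False)
  show ?thesis unfolding n1 n2 ..
qed

lemma winv_chf: "winv (chf m1 m2)"
  unfolding winv_def using chf_s1 chf_s2 by blast

lemma psi2_ev: "a = 2*i \<Longrightarrow> b = 2*j \<Longrightarrow> psi2 f (a,b) = f (i,j)"
  unfolding psi2_def by simp

lemma psi2_odd: "odd a \<or> odd b \<Longrightarrow> psi2 f (a,b) = 0"
  unfolding psi2_def by auto

lemma winv_psi2:
  assumes "winv f"
  shows "winv (psi2 f)"
proof -
  have s1: "\<And>u v. f (-u, u+v) = f (u,v)" and s2: "\<And>u v. f (u+v, -v) = f (u,v)"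
    using assms unfolding winv_def by auto
  have A: "psi2 f (-a, a+b) = psi2 f (a,b)" for a b
  proof (cases "even a \<and> even b")
    case True
    then obtain i j where ij: "a = 2*i" "b = 2*j" by (auto elim!: evenE)
    have "psi2 f (-a, a+b) = f (-i, i+j)" by (rule psi2_ev) (use ij in simp_all)
    also have "\<dots> = f (i,j)" by (rule s1)
    also have "\<dots> = psi2 f (a,b)" by (rule psi2_ev[symmetric]) (use ij in simp_all)
    finally show ?thesis .
  next
    case False
    then have "odd (-a) \<or> odd (a+b)" by auto
    then show ?thesis using psi2_odd[of "-a" "a+b" f] psi2_odd[of a b f] False by auto
  qed
  have B: "psi2 f (a+b, -b) = psi2 f (a,b)" for a b
  proof (cases "even a \<and> even b")
    case True
    then obtain i j where ij: "a = 2*i" "b = 2*j" by (auto elim!: evenE)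
    have "psi2 f (a+b, -b) = f (i+j, -j)" by (rule psi2_ev) (use ij in simp_all)
    also have "\<dots> = f (i,j)" by (rule s2)
    also have "\<dots> = psi2 f (a,b)" by (rule psi2_ev[symmetric]) (use ij in simp_all)
    finally show ?thesis .
  next
    case False
    then have "odd (a+b) \<or> odd (-b)" by auto
    then show ?thesis using psi2_odd[of "a+b" "-b" f] psi2_odd[of a b f] False by auto
  qed
  show ?thesis unfolding winv_def using A B by blast
qed

lemma winv_ch: "dominant \<mu> \<Longrightarrow> winv (ch \<mu>)"
  using ch_dom winv_chf by simp

lemma winv_sum:
  assumes "\<And>\<mu>. \<mu> \<in> S \<Longrightarrow> winv (g \<mu>)"
  shows "winv (\<lambda>x. \<Sum>\<mu>\<in>S. c \<mu> * g \<mu> x)"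
proof -
  have A: "g \<mu> (-u, u+v) = g \<mu> (u,v)" "g \<mu> (u+v, -v) = g \<mu> (u,v)" if "\<mu> \<in> S" for \<mu> u v
    using assms[OF that] unfolding winv_def by blast+
  have "(\<Sum>\<mu>\<in>S. c \<mu> * g \<mu> (-u, u+v)) = (\<Sum>\<mu>\<in>S. c \<mu> * g \<mu> (u,v))" for u v
    by (rule sum.cong[OF refl]) (simp only: A)
  moreover have "(\<Sum>\<mu>\<in>S. c \<mu> * g \<mu> (u+v, -v)) = (\<Sum>\<mu>\<in>S. c \<mu> * g \<mu> (u,v))" for u v
    by (rule sum.cong[OF refl]) (simp only: A)
  ultimately show ?thesis unfolding winv_def by blast
qed

lemma winv_diff:
  assumes "winv f" "winv g"
  shows "winv (\<lambda>x. f x - g x)"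
proof -
  have "f (-u, u+v) = f (u,v)" "f (u+v, -v) = f (u,v)" "g (-u, u+v) = g (u,v)" "g (u+v, -v) = g (u,v)" for u v
    using assms unfolding winv_def by blast+
  then show ?thesis unfolding winv_def by simp
qed

lemma inv1: "(\<And>u v. f (-u, u+v) = f (u,v)) \<Longrightarrow> p = (-u, u+v) \<Longrightarrow> f p = f (u,v)" by simp
lemma inv2: "(\<And>u v. f (u+v, -v) = f (u,v)) \<Longrightarrow> p = (u+v, -v) \<Longrightarrow> f p = f (u,v)" by simp

lemma alt6_rho:
  "alt6 f rho (x,y) = f (x-1,y-1) - f (x+1,y-2) - f (x-2,y+1) + f (x+2,y-1) + f (x-1,y+2) - f (x+1,y+1)"
  unfolding alt6_def rho_def wsub_def by (simp add: algebra_simps)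

lemma alt6_anti:
  assumes "winv f"
  shows "alt6 f rho (-a, a+b) = - alt6 f rho (a,b)" "alt6 f rho (a+b, -b) = - alt6 f rho (a,b)"
proof -
  have s1: "\<And>u v. f (-u, u+v) = f (u,v)" and s2: "\<And>u v. f (u+v, -v) = f (u,v)"
    using assms unfolding winv_def by auto
  note E = alt6_rho[of f]
  have "f (-a-1, a+b-1) = f (a+1,b-2)" by (rule inv1[where f=f and u="a+1" and v="b-2", OF s1]) simp
  moreover have "f (-a+1, a+b-2) = f (a-1,b-1)" by (rule inv1[where f=f and u="a-1" and v="b-1", OF s1]) simp
  moreover have "f (-a-2, a+b+1) = f (a+2,b-1)" by (rule inv1[where f=f and u="a+2" and v="b-1", OF s1]) simp
  moreover have "f (-a+2, a+b-1) = f (a-2,b+1)" by (rule inv1[where f=f and u="a-2" and v="b+1", OF s1]) simp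
  moreover have "f (-a-1, a+b+2) = f (a+1,b+1)" by (rule inv1[where f=f and u="a+1" and v="b+1", OF s1]) simp
  moreover have "f (-a+1, a+b+1) = f (a-1,b+2)" by (rule inv1[where f=f and u="a-1" and v="b+2", OF s1]) simp
  ultimately show "alt6 f rho (-a, a+b) = - alt6 f rho (a,b)"
    unfolding E[of "-a" "a+b"] E[of a b] by linarith
  have "f (a+b-1, -b-1) = f (a-2,b+1)" by (rule inv2[where f=f and u="a-2" and v="b+1", OF s2]) simp
  moreover have "f (a+b+1, -b-2) = f (a-1,b+2)" by (rule inv2[where f=f and u="a-1" and v="b+2", OF s2]) simp
  moreover have "f (a+b-2, -b+1) = f (a-1,b-1)" by (rule inv2[where f=f and u="a-1" and v="b-1", OF s2]) simp
  moreover have "f (a+b+2, -b-1) = f (a+1,b+1)" by (rule inv2[where f=f and u="a+1" and v="b+1", OF s2]) simp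
  moreover have "f (a+b-1, -b+2) = f (a+1,b-2)" by (rule inv2[where f=f and u="a+1" and v="b-2", OF s2]) simp
  moreover have "f (a+b+1, -b+1) = f (a+2,b-1)" by (rule inv2[where f=f and u="a+2" and v="b-1", OF s2]) simp
  ultimately show "alt6 f rho (a+b, -b) = - alt6 f rho (a,b)"
    unfolding E[of "a+b" "-b"] E[of a b] by linarith
qed

lemma chamber:
  fixes g :: "int \<Rightarrow> int \<Rightarrow> int"
  assumes s1: "\<And>u v. g (-u) (u+v) = - g u v" and s2: "\<And>u v. g (u+v) (-v) = - g u v"
    and d: "\<And>u v. u \<ge> 1 \<Longrightarrow> v \<ge> 1 \<Longrightarrow> g u v = 0"
  shows "g a b = 0"
proof -
  have w0: "g (-b) (-a) = - g a b" using s1[of a b] s2[of "-a" "a+b"] s1[of b "-a-b"] by simp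
  have w12: "g (-a-b) a = g a b" using s2[of a b] s1[of "a+b" "-b"] by simp
  have w21: "g b (-a-b) = g a b" using s1[of a b] s2[of "-a" "a+b"] by simp
  consider "a \<ge> 1" "b \<ge> 1" | "a = 0" | "b = 0" | "a + b = 0" | "a < 0" "a + b > 0"
    | "b < 0" "a + b > 0" | "a > 0" "a + b < 0" | "b > 0" "a + b < 0" | "a < 0" "b < 0" by linarith
  then show ?thesis
  proof cases
    case 1 then show ?thesis by (rule d)
  next
    case 2 then show ?thesis using s1[of 0 b] by simp
  next
    case 3 then show ?thesis using s2[of a 0] by simp
  next
    case 4 then have b: "b = -a" by simp
    show ?thesis using w0 unfolding b by simp
  next
    case 5 then show ?thesis using s1[of a b] d[of "-a" "a+b"] by simp
  next
    case 6 then show ?thesis using s2[of a b] d[of "a+b" "-b"] by simp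
  next
    case 7 then show ?thesis using w12 d[of "-a-b" a] by simp
  next
    case 8 then show ?thesis using w21 d[of b "-a-b"] by simp
  next
    case 9 then show ?thesis using w0 d[of "-b" "-a"] by simp
  qed
qed


section \<open>Plethysm multiplicities\<close>

definition mm :: "int \<Rightarrow> int \<Rightarrow> wt \<Rightarrow> int" where
  "mm m1 m2 \<mu> = (if dominant \<mu> then alt6 (psi2 (chf m1 m2)) rho (wadd \<mu> rho) else 0)"

lemma psi2_box:
  assumes nz: "psi2 (chf m1 m2) y \<noteq> 0"
  shows "\<bar>fst y\<bar> \<le> 2*(m1+m2) \<and> \<bar>snd y\<bar> \<le> 2*(m1+m2)"
proof -
  obtain a b where y: "y = (a,b)" by fastforce
  have "even a \<and> even b" using psi2_odd[of a b "chf m1 m2"] nz y by auto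
  then obtain i j where ij: "a = 2*i" "b = 2*j" by (auto elim!: evenE)
  have "psi2 (chf m1 m2) y = chf m1 m2 (i,j)" unfolding y by (rule psi2_ev) (use ij in simp_all)
  then have "chf m1 m2 (i,j) \<noteq> 0" using nz by simp
  then have "\<bar>i\<bar> \<le> m1+m2 \<and> \<bar>j\<bar> \<le> m1+m2" using chf_box by force
  then show ?thesis using ij y by auto
qed

lemma mm_box:
  assumes nz: "mm m1 m2 \<mu> \<noteq> 0"
  shows "\<bar>fst \<mu>\<bar> \<le> 2*(m1+m2) + 3 \<and> \<bar>snd \<mu>\<bar> \<le> 2*(m1+m2) + 3"
proof (rule ccontr)
  obtain a b where m: "\<mu> = (a,b)" by fastforce
  let ?F = "psi2 (chf m1 m2)"
  assume nb: "\<not> (\<bar>fst \<mu>\<bar> \<le> 2*(m1+m2) + 3 \<and> \<bar>snd \<mu>\<bar> \<le> 2*(m1+m2) + 3)"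
  have F0: "?F (p1,p2) = 0" if "\<not> (\<bar>p1\<bar> \<le> 2*(m1+m2) \<and> \<bar>p2\<bar> \<le> 2*(m1+m2))" for p1 p2
    using psi2_box[of m1 m2 "(p1,p2)"] that by auto
  have w: "wadd \<mu> rho = (a+1, b+1)" unfolding m wadd_def rho_def by simp
  have nb': "\<not> (\<bar>a\<bar> \<le> 2*(m1+m2) + 3 \<and> \<bar>b\<bar> \<le> 2*(m1+m2) + 3)" using nb m by simp
  have "?F (a+1-1, b+1-1) = 0" by (rule F0) (use nb' in arith)
  moreover have "?F (a+1+1, b+1-2) = 0" by (rule F0) (use nb' in arith)
  moreover have "?F (a+1-2, b+1+1) = 0" by (rule F0) (use nb' in arith)
  moreover have "?F (a+1+2, b+1-1) = 0" by (rule F0) (use nb' in arith)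
  moreover have "?F (a+1-1, b+1+2) = 0" by (rule F0) (use nb' in arith)
  moreover have "?F (a+1+1, b+1+1) = 0" by (rule F0) (use nb' in arith)
  ultimately have "alt6 ?F rho (wadd \<mu> rho) = 0" unfolding w alt6_rho by simp
  then show False using nz unfolding mm_def by (simp split: if_splits)
qed

lemma pleth_eq:
  assumes "m1 \<ge> 0" "m2 \<ge> 0"
  shows "pleth_mult (m1, m2) = mm m1 m2"
proof -
  let ?F = "psi2 (chf m1 m2)"
  let ?S = "{\<mu>. mm m1 m2 \<mu> \<noteq> 0}"
  have finS: "finite ?S"
    by (rule finite_subset[OF _ box_finite[of "2*(m1+m2)+3"]]) (use mm_box in auto)
  have domS: "\<And>\<mu>. \<mu> \<in> ?S \<Longrightarrow> dominant \<mu>" unfolding mm_def by (auto split: if_splits)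
  have chl: "ch (m1,m2) = chf m1 m2" by (rule ch_eq[OF assms])
  have finF: "finite {x. ?F x \<noteq> 0}"
    by (rule finite_subset[OF _ box_finite[of "2*(m1+m2)"]]) (use psi2_box in auto)
  define G where "G = (\<lambda>x. \<Sum>\<mu>\<in>?S. mm m1 m2 \<mu> * ch \<mu> x)"
  define H where "H = (\<lambda>x. ?F x - G x)"
  have subG: "{x. G x \<noteq> 0} \<subseteq> (\<Union>\<mu>\<in>?S. {x. ch \<mu> x \<noteq> 0})"
  proof
    fix x assume x: "x \<in> {x. G x \<noteq> 0}"
    show "x \<in> (\<Union>\<mu>\<in>?S. {x. ch \<mu> x \<noteq> 0})"
    proof (rule ccontr)
      assume "x \<notin> (\<Union>\<mu>\<in>?S. {x. ch \<mu> x \<noteq> 0})"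
      then have "\<forall>\<mu>\<in>?S. ch \<mu> x = 0" by auto
      then have "G x = 0" unfolding G_def by (intro sum.neutral) simp
      then show False using x by simp
    qed
  qed
  have finG: "finite {x. G x \<noteq> 0}"
    by (rule finite_subset[OF subG]) (use finS ch_finite domS in auto)
  have finH: "finite {x. H x \<noteq> 0}"
    by (rule finite_subset[of _ "{x. ?F x \<noteq> 0} \<union> {x. G x \<noteq> 0}"]) (use finF finG H_def in auto)
  have winvH: "winv H" unfolding H_def G_def
    by (intro winv_diff winv_psi2 winv_chf winv_sum winv_ch domS)
  have zeroH: "alt6 H rho (u,v) = 0" for u v
  proof (rule chamber[of "\<lambda>u v. alt6 H rho (u,v)"])
    show "alt6 H rho (-a, a+b) = - alt6 H rho (a,b)" for a b by (rule alt6_anti(1)[OF winvH])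
    show "alt6 H rho (a+b, -b) = - alt6 H rho (a,b)" for a b by (rule alt6_anti(2)[OF winvH])
    show "alt6 H rho (a,b) = 0" if "a \<ge> 1" "b \<ge> 1" for a b
    proof -
      let ?m0 = "(a-1, b-1)"
      have d0: "dominant ?m0" using that unfolding dominant_def by simp
      have w: "wadd ?m0 rho = (a,b)" unfolding wadd_def rho_def by simp
      have "alt6 H rho (a,b) = alt6 ?F rho (a,b) - alt6 G rho (a,b)" unfolding H_def alt6_def by simp
      also have "alt6 G rho (a,b) = (if ?m0 \<in> ?S then mm m1 m2 ?m0 else 0)"
        unfolding G_def w[symmetric] by (rule coef[OF finS _ d0]) (use domS in blast)
      also have "\<dots> = mm m1 m2 ?m0" by simp
      also have "alt6 ?F rho (a,b) = mm m1 m2 ?m0" unfolding mm_def w using d0 by simp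
      finally show ?thesis by simp
    qed
  qed
  have "alt6 H rho x = 0" for x using zeroH[of "fst x" "snd x"] by simp
  then have H0: "H = (\<lambda>_. 0)" by (rule alt6_inj[OF finH])
  have psiG: "psi2 (ch (m1,m2)) = G"
  proof
    fix x show "psi2 (ch (m1,m2)) x = G x" using fun_cong[OF H0, of x] unfolding H_def chl by simp
  qed
  show ?thesis unfolding pleth_mult_def
  proof (rule the_equality)
    show "finite ?S \<and> (\<forall>\<mu>. \<not> dominant \<mu> \<longrightarrow> mm m1 m2 \<mu> = 0) \<and>
      psi2 (ch (m1, m2)) = (\<lambda>x. \<Sum>\<mu>\<in>?S. mm m1 m2 \<mu> * ch \<mu> x)"
      using finS psiG unfolding G_def mm_def by simp
  next
    fix m' assume m': "finite {\<mu>. m' \<mu> \<noteq> 0} \<and> (\<forall>\<mu>. \<not> dominant \<mu> \<longrightarrow> m' \<mu> = 0) \<and>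
      psi2 (ch (m1, m2)) = (\<lambda>x. \<Sum>\<mu>\<in>{\<mu>. m' \<mu> \<noteq> 0}. m' \<mu> * ch \<mu> x)"
    show "m' = mm m1 m2"
    proof
      fix \<mu> show "m' \<mu> = mm m1 m2 \<mu>"
      proof (cases "dominant \<mu>")
        case True
        have eqF: "?F = (\<lambda>x. \<Sum>\<mu>\<in>{\<mu>. m' \<mu> \<noteq> 0}. m' \<mu> * ch \<mu> x)" using m' chl by simp
        have "mm m1 m2 \<mu> = alt6 ?F rho (wadd \<mu> rho)" using True unfolding mm_def by simp
        also have "\<dots> = (if \<mu> \<in> {\<mu>. m' \<mu> \<noteq> 0} then m' \<mu> else 0)"
          unfolding eqF by (rule coef) (use m' True in auto)
        finally show ?thesis by auto
      next
        case False
        have "m' \<mu> = 0" using m' False by blast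
        then show ?thesis using False unfolding mm_def by simp
      qed
    qed
  qed
qed


lemma nd_shift:
  fixes t t' k :: int
  assumes "\<not> 3 dvd t" "t' = t + 3*k"
  shows "\<not> 3 dvd t'"
proof
  assume "3 dvd t'"
  then have "3 dvd (t' - 3*k)" by (intro dvd_diff) simp_all
  then show False using assms by simp
qed

lemma ar00:
  fixes m1 m2 i j k u1 u2 :: int
  assumes "m1 \<ge> 0" "m2 \<ge> 0" "i \<ge> 0" "j \<ge> 0" "u1 = 2*i" "u2 = 2*j"
    "m1 + 2*m2 - i - 2*j = 3*k"
    "kk (m1+m2) m2 (k+j+i) (k+j) k \<noteq> kk (m1+m2) m2 (k+j+i+1) (k+j) (k-1)"
  shows "(m1 \<ge> m2 \<longrightarrow> u1 + 2*u2 \<ge> 2*(m1-m2)) \<and> (m1 \<le> m2 \<longrightarrow> 2*u1 + u2 \<ge> 2*(m2-m1))"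
  using assms unfolding kk_def mi_def min_def max_def by (smt (verit))

lemma ar01:
  fixes m1 m2 i j k u1 u2 :: int
  assumes "m1 \<ge> 0" "m2 \<ge> 0" "i \<ge> 0" "j \<ge> 0" "u1 = 2*i" "u2 = 2*j+1"
    "m1 + 2*m2 - (i+1) - 2*j = 3*k"
    "kk (m1+m2) m2 (k+j+i+1) (k+j) k \<noteq> kk (m1+m2) m2 (k+j+1+i) (k+j+1) (k-1)"
  shows "(m1 \<ge> m2 \<longrightarrow> u1 + 2*u2 \<ge> 2*(m1-m2)) \<and> (m1 \<le> m2 \<longrightarrow> 2*u1 + u2 \<ge> 2*(m2-m1))"
  using assms unfolding kk_def mi_def min_def max_def by (smt (verit))

lemma ar10:
  fixes m1 m2 i j k u1 u2 :: int
  assumes "m1 \<ge> 0" "m2 \<ge> 0" "i \<ge> 0" "j \<ge> 0" "u1 = 2*i+1" "u2 = 2*j"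
    "m1 + 2*m2 - i - 2*(j+1) = 3*k"
    "kk (m1+m2) m2 (k+j+1+i) (k+j+1) k \<noteq> kk (m1+m2) m2 (k+j+i+2) (k+j) k"
  shows "(m1 \<ge> m2 \<longrightarrow> u1 + 2*u2 \<ge> 2*(m1-m2)) \<and> (m1 \<le> m2 \<longrightarrow> 2*u1 + u2 \<ge> 2*(m2-m1))"
  using assms unfolding kk_def mi_def min_def max_def by (smt (verit))

lemma final:
  fixes m1 m2 u1 u2 :: int
  assumes nn: "m1 \<ge> 0" "m2 \<ge> 0" "u1 \<ge> 0" "u2 \<ge> 0"
    and nz: "alt6 (psi2 (chf m1 m2)) rho (u1+1, u2+1) \<noteq> 0"
  shows "(m1 \<ge> m2 \<longrightarrow> u1 + 2*u2 \<ge> 2*(m1-m2)) \<and> (m1 \<le> m2 \<longrightarrow> 2*u1 + u2 \<ge> 2*(m2-m1))"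
proof -
  let ?F = "psi2 (chf m1 m2)"
  have nz': "?F (u1+1-1, u2+1-1) - ?F (u1+1+1, u2+1-2) - ?F (u1+1-2, u2+1+1) + ?F (u1+1+2, u2+1-1)
      + ?F (u1+1-1, u2+1+2) - ?F (u1+1+1, u2+1+1) \<noteq> 0" using nz unfolding alt6_rho .
  consider (ee) i j where "u1 = 2*i" "u2 = 2*j" | (eo) i j where "u1 = 2*i" "u2 = 2*j+1"
    | (oe) i j where "u1 = 2*i+1" "u2 = 2*j" | (oo) i j where "u1 = 2*i+1" "u2 = 2*j+1"
    by (metis evenE oddE)
  then show ?thesis
  proof cases
    case (ee i j)
    have ij: "i \<ge> 0" "j \<ge> 0" using nn ee by simp_all
    have "?F (u1+1-1, u2+1-1) = chf m1 m2 (i,j)" by (rule psi2_ev) (use ee in simp_all)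
    moreover have "?F (u1+1+1, u2+1-2) = 0" by (rule psi2_odd) (use ee in presburger)
    moreover have "?F (u1+1-2, u2+1+1) = 0" by (rule psi2_odd) (use ee in presburger)
    moreover have "?F (u1+1+2, u2+1-1) = 0" by (rule psi2_odd) (use ee in presburger)
    moreover have "?F (u1+1-1, u2+1+2) = 0" by (rule psi2_odd) (use ee in presburger)
    moreover have "?F (u1+1+1, u2+1+1) = chf m1 m2 (i+1,j+1)" by (rule psi2_ev) (use ee in simp_all)
    ultimately have D: "chf m1 m2 (i,j) \<noteq> chf m1 m2 (i+1,j+1)" using nz' by simp
    show ?thesis
    proof (cases "3 dvd (m1 + 2*m2 - i - 2*j)")
      case True
      then obtain k where k: "m1 + 2*m2 - i - 2*j = 3*k" by blast
      have "chf m1 m2 (i,j) = kk (m1+m2) m2 (k+j+i) (k+j) k" by (rule chf_c) (use k in linarith)+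
      moreover have "chf m1 m2 (i+1,j+1) = kk (m1+m2) m2 (k+j+i+1) (k+j) (k-1)" by (rule chf_c) (use k in linarith)+
      ultimately show ?thesis using ar00[OF nn(1,2) ij ee k] D by simp
    next
      case False
      have "chf m1 m2 (i,j) = 0" by (rule chf_nd) (rule False)
      moreover have "chf m1 m2 (i+1,j+1) = 0" by (rule chf_nd, rule nd_shift[OF False, where k="-1"]) simp
      ultimately show ?thesis using D by simp
    qed
  next
    case (eo i j)
    have ij: "i \<ge> 0" "j \<ge> 0" using nn eo by simp_all
    have "?F (u1+1-1, u2+1-1) = 0" by (rule psi2_odd) (use eo in presburger)
    moreover have "?F (u1+1+1, u2+1-2) = chf m1 m2 (i+1,j)" by (rule psi2_ev) (use eo in simp_all)
    moreover have "?F (u1+1-2, u2+1+1) = 0" by (rule psi2_odd) (use eo in presburger)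
    moreover have "?F (u1+1+2, u2+1-1) = 0" by (rule psi2_odd) (use eo in presburger)
    moreover have "?F (u1+1-1, u2+1+2) = chf m1 m2 (i,j+2)" by (rule psi2_ev) (use eo in simp_all)
    moreover have "?F (u1+1+1, u2+1+1) = 0" by (rule psi2_odd) (use eo in presburger)
    ultimately have D: "chf m1 m2 (i+1,j) \<noteq> chf m1 m2 (i,j+2)" using nz' by simp
    show ?thesis
    proof (cases "3 dvd (m1 + 2*m2 - (i+1) - 2*j)")
      case True
      then obtain k where k: "m1 + 2*m2 - (i+1) - 2*j = 3*k" by blast
      have "chf m1 m2 (i+1,j) = kk (m1+m2) m2 (k+j+i+1) (k+j) k" by (rule chf_c) (use k in linarith)+
      moreover have "chf m1 m2 (i,j+2) = kk (m1+m2) m2 (k+j+1+i) (k+j+1) (k-1)" by (rule chf_c) (use k in linarith)+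
      ultimately show ?thesis using ar01[OF nn(1,2) ij eo k] D by simp
    next
      case False
      have "chf m1 m2 (i+1,j) = 0" by (rule chf_nd) (rule False)
      moreover have "chf m1 m2 (i,j+2) = 0" by (rule chf_nd, rule nd_shift[OF False, where k="-1"]) simp
      ultimately show ?thesis using D by simp
    qed
  next
    case (oe i j)
    have ij: "i \<ge> 0" "j \<ge> 0" using nn oe by simp_all
    have "?F (u1+1-1, u2+1-1) = 0" by (rule psi2_odd) (use oe in presburger)
    moreover have "?F (u1+1+1, u2+1-2) = 0" by (rule psi2_odd) (use oe in presburger)
    moreover have "?F (u1+1-2, u2+1+1) = chf m1 m2 (i,j+1)" by (rule psi2_ev) (use oe in simp_all)
    moreover have "?F (u1+1+2, u2+1-1) = chf m1 m2 (i+2,j)" by (rule psi2_ev) (use oe in simp_all)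
    moreover have "?F (u1+1-1, u2+1+2) = 0" by (rule psi2_odd) (use oe in presburger)
    moreover have "?F (u1+1+1, u2+1+1) = 0" by (rule psi2_odd) (use oe in presburger)
    ultimately have D: "chf m1 m2 (i,j+1) \<noteq> chf m1 m2 (i+2,j)" using nz' by simp
    show ?thesis
    proof (cases "3 dvd (m1 + 2*m2 - i - 2*(j+1))")
      case True
      then obtain k where k: "m1 + 2*m2 - i - 2*(j+1) = 3*k" by blast
      have k': "m1 + 2*m2 = 3*k + i + 2*j + 2" using k by simp
      have "chf m1 m2 (i,j+1) = kk (m1+m2) m2 (k+j+1+i) (k+j+1) k" by (rule chf_c) (use k' in linarith)+
      moreover have "chf m1 m2 (i+2,j) = kk (m1+m2) m2 (k+j+i+2) (k+j) k" by (rule chf_c) (use k' in linarith)+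
      ultimately show ?thesis using ar10[OF nn(1,2) ij oe k] D by simp
    next
      case False
      have "chf m1 m2 (i,j+1) = 0" by (rule chf_nd) (rule False)
      moreover have "chf m1 m2 (i+2,j) = 0" by (rule chf_nd, rule nd_shift[OF False, where k=0]) simp
      ultimately show ?thesis using D by simp
    qed
  next
    case (oo i j)
    have "?F (u1+1-1, u2+1-1) = 0" by (rule psi2_odd) (use oo in presburger)
    moreover have "?F (u1+1+1, u2+1-2) = 0" by (rule psi2_odd) (use oo in presburger)
    moreover have "?F (u1+1-2, u2+1+1) = 0" by (rule psi2_odd) (use oo in presburger)
    moreover have "?F (u1+1+2, u2+1-1) = 0" by (rule psi2_odd) (use oo in presburger)
    moreover have "?F (u1+1-1, u2+1+2) = 0" by (rule psi2_odd) (use oo in presburger)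
    moreover have "?F (u1+1+1, u2+1+1) = 0" by (rule psi2_odd) (use oo in presburger)
    ultimately show ?thesis using nz' by simp
  qed
qed

theorem mainTheorem15:
  fixes m1 m2 u1 u2 :: nat
  assumes "pleth_mult (int m1, int m2) (int u1, int u2) \<noteq> 0"
  shows "(m1 \<ge> m2 \<longrightarrow> int u1 + 2 * int u2 \<ge> 2 * (int m1 - int m2)) \<and>
         (m1 \<le> m2 \<longrightarrow> 2 * int u1 + int u2 \<ge> 2 * (int m2 - int m1))"
proof -
  have pe: "pleth_mult (int m1, int m2) = mm (int m1) (int m2)" by (rule pleth_eq) simp_all
  have "mm (int m1) (int m2) (int u1, int u2) \<noteq> 0" using assms pe by simp
  then have "alt6 (psi2 (chf (int m1) (int m2))) rho (int u1 + 1, int u2 + 1) \<noteq> 0"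
    unfolding mm_def wadd_def rho_def dominant_def by simp
  from final[OF _ _ _ _ this] show ?thesis by simp
qed

end
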